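(* Let $G$ and $H$ be finite simple connected graphs of order at least $3$, and let $D$ be a minimal dominating set of $G$. The set $D \times V(H)$ is a minimal dominating set of the direct product $G \times H$ if and only if $D$ is an independent set in $G$.
   Context: A set $D$ of vertices is dominating if every vertex is in $D$ or adjacent to a vertex of $D$; it is minimal if no proper subset is dominating. The direct product $G\times H$ has vertex set $V(G)\times V(H)$, with $(g_1,h_1)$ adjacent to $(g_2,h_2)$ iff $g_1g_2\in E(G)$ and $h_1h_2\in E(H)$. *)

theory Defs
  imports Main
begin

definition simple_graph :: "'a set \<Rightarrow> ('a \<Rightarrow> 'a \<Rightarrow> bool) \<Rightarrow> bool" where
  "simple_graph V E \<longleftrightarrow> finite V \<and> (\<forall>x y. E x y \<longrightarrow> x \<in> V \<and> y \<in> V)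
     \<and> (\<forall>x y. E x y \<longrightarrow> E y x) \<and> (\<forall>x. \<not> E x x)"

definition connected_graph :: "'a set \<Rightarrow> ('a \<Rightarrow> 'a \<Rightarrow> bool) \<Rightarrow> bool" where
  "connected_graph V E \<longleftrightarrow> (\<forall>x\<in>V. \<forall>y\<in>V. E\<^sup>*\<^sup>* x y)"

definition dominating :: "'a set \<Rightarrow> ('a \<Rightarrow> 'a \<Rightarrow> bool) \<Rightarrow> 'a set \<Rightarrow> bool" where
  "dominating V E D \<longleftrightarrow> D \<subseteq> V \<and> (\<forall>v\<in>V. v \<in> D \<or> (\<exists>u\<in>D. E v u))"

definition minimal_dominating :: "'a set \<Rightarrow> ('a \<Rightarrow> 'a \<Rightarrow> bool) \<Rightarrow> 'a set \<Rightarrow> bool" where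
  "minimal_dominating V E D \<longleftrightarrow> dominating V E D \<and> (\<forall>D'. D' \<subset> D \<longrightarrow> \<not> dominating V E D')"

definition independent_set :: "'a set \<Rightarrow> ('a \<Rightarrow> 'a \<Rightarrow> bool) \<Rightarrow> 'a set \<Rightarrow> bool" where
  "independent_set V E S \<longleftrightarrow> S \<subseteq> V \<and> (\<forall>x\<in>S. \<forall>y\<in>S. \<not> E x y)"

definition direct_prod_edge :: "('a \<Rightarrow> 'a \<Rightarrow> bool) \<Rightarrow> ('b \<Rightarrow> 'b \<Rightarrow> bool) \<Rightarrow> ('a \<times> 'b) \<Rightarrow> ('a \<times> 'b) \<Rightarrow> bool" where
  "direct_prod_edge EG EH p q \<longleftrightarrow> EG (fst p) (fst q) \<and> EH (snd p) (snd q)"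

end

theory Submission
  imports Defs
begin

lemma small_card:
  assumes "finite V" "card V \<ge> 3"
  shows "\<exists>z\<in>V. z \<noteq> a \<and> z \<noteq> b"
proof (rule ccontr)
  assume "\<not> ?thesis"
  then have "V \<subseteq> {a, b}" by blast
  then have "card V \<le> card {a, b}" by (intro card_mono) auto
  also have "\<dots> \<le> 2" by (simp add: card_insert_if)
  finally show False using assms by simp
qed

lemma has_nb:
  assumes "simple_graph V E" "connected_graph V E" "card V \<ge> 3" "x \<in> V"
  shows "\<exists>y. E x y"
proof -
  obtain y where y: "y \<in> V" "y \<noteq> x"
    using small_card[of V x x] assms by (auto simp: simple_graph_def)
  have "E\<^sup>*\<^sup>* x y" using assms y by (auto simp: connected_graph_def)
  then show ?thesis using y(2) by (cases rule: converse_rtranclpE) auto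
qed

lemma comp2:
  assumes "E\<^sup>*\<^sup>* h0 z" "\<forall>y. E h0 y \<longrightarrow> y = k" "\<forall>y. E k y \<longrightarrow> y = h0"
  shows "z \<in> {h0, k}"
  using assms(1) by (induction rule: rtranclp_induct) (use assms in auto)

lemma good_h:
  assumes "simple_graph V E" "connected_graph V E" "card V \<ge> 3"
  shows "\<exists>h\<in>V. \<forall>x\<in>V. \<exists>y. E x y \<and> y \<noteq> h"
proof -
  have fin: "finite V" using assms by (simp add: simple_graph_def)
  have nb: "\<And>x. x \<in> V \<Longrightarrow> \<exists>y. E x y" using has_nb assms by metis
  have sym: "\<And>x y. E x y \<Longrightarrow> E y x" and inV: "\<And>x y. E x y \<Longrightarrow> x \<in> V \<and> y \<in> V"
    using assms(1) by (auto simp: simple_graph_def)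
  obtain h0 where h0: "h0 \<in> V" using assms(3) by fastforce
  show ?thesis
  proof (cases "\<forall>k. E k h0 \<longrightarrow> (\<exists>k'. E k k' \<and> k' \<noteq> h0)")
    case True
    have "\<forall>x\<in>V. \<exists>y. E x y \<and> y \<noteq> h0"
    proof
      fix x assume "x \<in> V"
      show "\<exists>y. E x y \<and> y \<noteq> h0"
      proof (cases "E x h0")
        case True then show ?thesis using \<open>\<forall>k. E k h0 \<longrightarrow> (\<exists>k'. E k k' \<and> k' \<noteq> h0)\<close> by blast
      next
        case False then show ?thesis using nb[OF \<open>x \<in> V\<close>] by blast
      qed
    qed
    then show ?thesis using h0 by blast
  next
    case False
    then obtain k where k: "E k h0" "\<forall>y. E k y \<longrightarrow> y = h0" by blast
    have kV: "k \<in> V" using inV k(1) by blast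
    have "\<forall>x\<in>V. \<exists>y. E x y \<and> y \<noteq> k"
    proof
      fix x assume xV: "x \<in> V"
      show "\<exists>y. E x y \<and> y \<noteq> k"
      proof (cases "x = h0")
        case True
        show ?thesis
        proof (rule ccontr)
          assume "\<not> ?thesis"
          then have a: "\<forall>y. E h0 y \<longrightarrow> y = k" using True by blast
          obtain z where z: "z \<in> V" "z \<noteq> h0" "z \<noteq> k" using small_card[OF fin assms(3)] by blast
          have "E\<^sup>*\<^sup>* h0 z" using assms(2) h0 z unfolding connected_graph_def by blast
          from comp2[OF this a k(2)] z show False by blast
        qed
      next
        case False
        obtain y where "E x y" using nb xV by blast
        moreover have "y \<noteq> k" using k(2) sym \<open>E x y\<close> False by blast
        ultimately show ?thesis by blast
      qed
    qed
    then show ?thesis using kV by blast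
  qed
qed

theorem lemma11:
  fixes VG :: "'a set" and EG :: "'a \<Rightarrow> 'a \<Rightarrow> bool"
    and VH :: "'b set" and EH :: "'b \<Rightarrow> 'b \<Rightarrow> bool"
    and D :: "'a set"
  assumes "simple_graph VG EG" and "connected_graph VG EG" and "card VG \<ge> 3"
    and "simple_graph VH EH" and "connected_graph VH EH" and "card VH \<ge> 3"
    and "minimal_dominating VG EG D"
  shows "minimal_dominating (VG \<times> VH) (direct_prod_edge EG EH) (D \<times> VH)
           \<longleftrightarrow> independent_set VG EG D"
proof -
  have nbH: "\<And>x. x \<in> VH \<Longrightarrow> \<exists>y. EH x y" using has_nb assms(4-6) by metis
  have inVH: "\<And>x y. EH x y \<Longrightarrow> x \<in> VH \<and> y \<in> VH"
    using assms(4) by (auto simp: simple_graph_def)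
  have domG: "dominating VG EG D" using assms(7) by (simp add: minimal_dominating_def)
  have DV: "D \<subseteq> VG" using domG by (simp add: dominating_def)
  have dom: "dominating (VG \<times> VH) (direct_prod_edge EG EH) (D \<times> VH)"
    unfolding dominating_def
  proof (intro conjI ballI)
    show "D \<times> VH \<subseteq> VG \<times> VH" using DV by blast
  next
    fix p assume p: "p \<in> VG \<times> VH"
    obtain g k where pk: "p = (g, k)" by (cases p)
    show "p \<in> D \<times> VH \<or> (\<exists>u\<in>D \<times> VH. direct_prod_edge EG EH p u)"
    proof (cases "g \<in> D")
      case True then show ?thesis using p pk by blast
    next
      case False
      then obtain u where u: "u \<in> D" "EG g u" using domG p pk by (auto simp: dominating_def)
      obtain k' where "EH k k'" using nbH p pk by blast
      then show ?thesis using u inVH pk by (auto simp: direct_prod_edge_def)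
    qed
  qed
  show ?thesis
  proof
    assume md: "minimal_dominating (VG \<times> VH) (direct_prod_edge EG EH) (D \<times> VH)"
    show "independent_set VG EG D"
      unfolding independent_set_def
    proof (intro conjI DV ballI notI)
      fix d1 d2 assume d: "d1 \<in> D" "d2 \<in> D" "EG d1 d2"
      obtain h where hV: "h \<in> VH" and h: "\<forall>x\<in>VH. \<exists>y. EH x y \<and> y \<noteq> h"
        using good_h assms(4-6) by blast
      let ?D' = "D \<times> VH - {(d1, h)}"
      have sub: "?D' \<subset> D \<times> VH" using d hV by blast
      have "dominating (VG \<times> VH) (direct_prod_edge EG EH) ?D'"
        unfolding dominating_def
      proof (intro conjI ballI)
        show "?D' \<subseteq> VG \<times> VH" using DV by blast
      next
        fix p assume p: "p \<in> VG \<times> VH"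
        obtain g k where pk: "p = (g, k)" by (cases p)
        show "p \<in> ?D' \<or> (\<exists>u\<in>?D'. direct_prod_edge EG EH p u)"
        proof (cases "g \<in> D")
          case True
          show ?thesis
          proof (cases "p = (d1, h)")
            case True
            obtain h' where "EH h h'" using nbH hV by blast
            then have "(d2, h') \<in> ?D'" "direct_prod_edge EG EH p (d2, h')"
              using True d inVH assms(1) by (auto simp: direct_prod_edge_def simple_graph_def)
            then show ?thesis by blast
          next
            case False then show ?thesis using p pk \<open>g \<in> D\<close> by blast
          qed
        next
          case False
          then obtain u where u: "u \<in> D" "EG g u" using domG p pk by (auto simp: dominating_def)
          obtain k' where k': "EH k k'" "k' \<noteq> h" using h p pk by blast
          then have "(u, k') \<in> ?D'" "direct_prod_edge EG EH p (u, k')"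
            using u inVH pk by (auto simp: direct_prod_edge_def)
          then show ?thesis by blast
        qed
      qed
      then show False using md sub by (auto simp: minimal_dominating_def)
    qed
  next
    assume ind: "independent_set VG EG D"
    show "minimal_dominating (VG \<times> VH) (direct_prod_edge EG EH) (D \<times> VH)"
      unfolding minimal_dominating_def
    proof (intro conjI dom allI impI notI)
      fix D' assume sub: "D' \<subset> D \<times> VH" and dD: "dominating (VG \<times> VH) (direct_prod_edge EG EH) D'"
      then obtain d h where dh: "(d, h) \<in> D \<times> VH" "(d, h) \<notin> D'" by blast
      have "(d, h) \<in> VG \<times> VH" using dh DV by blast
      then obtain u where "u \<in> D'" "direct_prod_edge EG EH (d, h) u"
        using dD dh(2) unfolding dominating_def by blast
      then show False using sub ind dh
        by (cases u) (auto simp: direct_prod_edge_def independent_set_def)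
    qed
  qed
qed

end
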